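(* Let $n \geqslant 3$ and let $C_{n+1}$ be the cycle with vertex set $\{0,1,\ldots,n\}$ and edges $\{j,j+1\}$ for $0\leqslant j<n$ together with $\{n,0\}$. Then the word $012\ldots n$ does not occur as a subword (contiguous factor) of any uniform word whose alternating graph is $C_{n+1}$.
   Context: A word is uniform if each symbol occurring in it occurs the same number of times. A word $w$ is a subword of $v=v_0v_1\ldots v_N$ if $w=v_mv_{m+1}\ldots v_{m+k}$ for some $m,k$. Two distinct symbols $a,b$ alternate in a word $u$ if both occur in $u$ and, after erasing all other letters of $u$, one obtains a factor of $abab\ldots$ or of $baba\ldots$. The alternating graph of a word $u$ is the graph whose vertices are the symbols occurring in $u$, with an edge $(a,b)$ iff $a$ and $b$ alternate in $u$. *)

theory Defs
  imports Main
begin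

definition uniform :: "'a list \<Rightarrow> bool" where
  "uniform u \<longleftrightarrow> (\<forall>a \<in> set u. \<forall>b \<in> set u. count_list u a = count_list u b)"

definition subword :: "'a list \<Rightarrow> 'a list \<Rightarrow> bool" where
  "subword w v \<longleftrightarrow> (\<exists>p s. v = p @ w @ s)"

definition abab_factor :: "'a \<Rightarrow> 'a \<Rightarrow> nat \<Rightarrow> nat \<Rightarrow> 'a list" where
  "abab_factor a b k m = map (\<lambda>i. if even i then a else b) [k..<k+m]"

definition alternate :: "'a list \<Rightarrow> 'a \<Rightarrow> 'a \<Rightarrow> bool" where
  "alternate u a b \<longleftrightarrow> a \<noteq> b \<and> a \<in> set u \<and> b \<in> set u \<and>
     (\<exists>k m. filter (\<lambda>x. x = a \<or> x = b) u = abab_factor a b k m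
          \<or> filter (\<lambda>x. x = a \<or> x = b) u = abab_factor b a k m)"

definition alt_vertices :: "'a list \<Rightarrow> 'a set" where
  "alt_vertices u = set u"

definition alt_edges :: "'a list \<Rightarrow> ('a \<times> 'a) set" where
  "alt_edges u = {(a, b). alternate u a b}"

definition cycle_vertices :: "nat \<Rightarrow> nat set" where
  "cycle_vertices n = {0..n}"

definition cycle_edges :: "nat \<Rightarrow> (nat \<times> nat) set" where
  "cycle_edges n = {(a, b). (a < n \<and> b = a + 1) \<or> (b < n \<and> a = b + 1)
                          \<or> (a = n \<and> b = 0) \<or> (a = 0 \<and> b = n)}"

end

theory Submission
  imports Defs
begin

lemma abab_Suc: "abab_factor a b k (Suc m) = abab_factor a b k m @ [if even (k+m) then a else b]"
  by (simp add: abab_factor_def)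

lemma abab_0: "abab_factor a b k 0 = []"
  by (simp add: abab_factor_def)

lemma abab_swap: "abab_factor b a k m = abab_factor a b (Suc k) m"
  by (induction m) (simp_all add: abab_Suc abab_0)

lemma abab_len[simp]: "length (abab_factor a b k m) = m"
  by (simp add: abab_factor_def)

lemma count_list_upt: "count_list [0..<j] i = (if i < j then 1 else 0)"
  by (induction j) auto

definition dif :: "'a \<Rightarrow> 'a \<Rightarrow> 'a list \<Rightarrow> int" where
  "dif a b w = int (count_list w a) - int (count_list w b)"

lemma dif_abab: "a \<noteq> b \<Longrightarrow> dif a b (abab_factor a b k m) = int ((k+m) mod 2) - int (k mod 2)"
proof (induction m)
  case 0 then show ?case by (simp add: abab_0 dif_def)
next
  case (Suc m)
  then show ?case
    by (cases "even (k+m)") (auto simp: abab_Suc dif_def elim!: evenE oddE)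
qed

lemma dif_filter: "dif a b (filter (\<lambda>x. x=a \<or> x=b) w) = dif a b w"
  by (induction w) (auto simp: dif_def)

lemma abab_prefix: "w @ w' = abab_factor a b k m \<Longrightarrow> w = abab_factor a b k (length w)"
proof -
  assume h: "w @ w' = abab_factor a b k m"
  then have l: "length w \<le> m" by (metis le_add1 length_append length_map length_upt add_diff_cancel_left' abab_factor_def)
  have "w = take (length w) (abab_factor a b k m)" using h by (metis append_eq_conv_conj)
  also have "\<dots> = abab_factor a b k (length w)" using l
    by (simp add: abab_factor_def take_map take_upt)
  finally show ?thesis .
qed

lemma alt_window:
  assumes "alternate u a b"
  shows "\<exists>c. \<forall>x. dif a b (take x u) \<in> {c, c+1}"
proof -
  let ?P = "\<lambda>x. x=a \<or> x=b"
  have ab: "a \<noteq> b" using assms by (simp add: alternate_def)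
  obtain K m where K: "filter ?P u = abab_factor a b K m"
    using assms unfolding alternate_def by (metis abab_swap)
  show ?thesis
  proof (intro exI allI)
    fix x
    have "filter ?P u = filter ?P (take x u) @ filter ?P (drop x u)"
      by (metis append_take_drop_id filter_append)
    then have "filter ?P (take x u) = abab_factor a b K (length (filter ?P (take x u)))"
      using K abab_prefix by metis
    then have "dif a b (take x u) = int ((K + length (filter ?P (take x u))) mod 2) - int (K mod 2)"
      using dif_filter dif_abab ab by metis
    then show "dif a b (take x u) \<in> {- int (K mod 2), - int (K mod 2) + 1}"
      by (cases "even K"; cases "even (K + length (filter ?P (take x u)))") (auto elim!: evenE oddE)
  qed
qed

lemma window_alt:
  assumes "a \<noteq> b" "k < 2" "\<forall>x \<le> length u. dif a b (take x u) \<in> {- int k, 1 - int k}"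
  shows "filter (\<lambda>x. x=a \<or> x=b) u = abab_factor a b k (length (filter (\<lambda>x. x=a \<or> x=b) u))"
  using assms(3)
proof (induction u rule: rev_induct)
  case Nil then show ?case by (simp add: abab_0)
next
  case (snoc z v)
  let ?P = "\<lambda>x. x=a \<or> x=b"
  have "\<forall>x \<le> length v. dif a b (take x v) \<in> {- int k, 1 - int k}"
  proof (intro allI impI)
    fix x assume x: "x \<le> length v"
    then have "take x (v @ [z]) = take x v" by simp
    then show "dif a b (take x v) \<in> {- int k, 1 - int k}"
      using snoc.prems x by (metis le_SucI length_append_singleton)
  qed
  then have IH: "filter ?P v = abab_factor a b k (length (filter ?P v))" using snoc.IH by blast
  define m where "m = length (filter ?P v)"
  have dv: "dif a b v = int ((k+m) mod 2) - int (k mod 2)"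
    using IH dif_filter dif_abab assms(1) m_def by metis
  have du: "dif a b (v @ [z]) \<in> {- int k, 1 - int k}" using snoc.prems[rule_format, of "Suc (length v)"] by simp
  show ?case
  proof (cases "?P z")
    case False then show ?thesis using IH by simp
  next
    case True
    then consider "z = a" | "z = b" by blast
    then show ?thesis
    proof cases
      case 1
      then have "dif a b (v @ [z]) = dif a b v + 1" using assms(1) by (simp add: dif_def)
      moreover have "k mod 2 = k" using assms(2) by simp
      ultimately have "even (k+m)" using du dv
        by (cases "even (k+m)") (auto simp: odd_iff_mod_2_eq_one)
      then show ?thesis using IH 1 m_def by (simp add: abab_Suc)
    next
      case 2
      then have "dif a b (v @ [z]) = dif a b v - 1" using assms(1) by (simp add: dif_def)
      moreover have "k mod 2 = k" using assms(2) by simp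
      ultimately have "odd (k+m)" using du dv
        by (cases "even (k+m)") (auto simp: odd_iff_mod_2_eq_one even_iff_mod_2_eq_zero)
      then show ?thesis using IH 2 assms(1) m_def by (simp add: abab_Suc)
    qed
  qed
qed


theorem lemma1:
  fixes n :: nat and u :: "nat list"
  assumes "n \<ge> 3"
    and "uniform u"
    and "alt_vertices u = cycle_vertices n"
    and "alt_edges u = cycle_edges n"
  shows "\<not> subword [0..<n+1] u"
proof
  assume "subword [0..<n+1] u"
  then obtain p s where u: "u = p @ [0..<n+1] @ s" by (auto simp: subword_def)
  define t where "t = length p"
  define C where "C j x = int (count_list (take x u) j)" for j x
  have Ct: "C i (t + j) = C i t + (if i < j then 1 else 0)" if "j \<le> n+1" for i j
  proof -
    have "take j ([0..<n+1] @ s) = [0..<j]" using that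
      by (simp add: take_append take_upt del: upt_Suc)
    then have "take (t+j) u = p @ [0..<j]" by (simp add: u t_def del: upt_Suc)
    moreover have "take t u = p" by (simp add: u t_def)
    ultimately show ?thesis by (simp add: C_def count_list_upt)
  qed
  have D: "dif a b (take x u) = C a x - C b x" for a b x by (simp add: dif_def C_def)
  have edge: "alternate u a b" if "(a,b) \<in> cycle_edges n" for a b
    using that assms(4) unfolding alt_edges_def by blast
  have win: "C j x - C (j+1) x - (C j t - C (j+1) t) \<in> {0,1}" if jn: "j < n" for j x
  proof -
    obtain c where c: "\<forall>x. C j x - C (j+1) x \<in> {c, c+1}"
      using alt_window[OF edge, of j "j+1"] jn D by (auto simp: cycle_edges_def)
    have "C j (t + (j+1)) = C j t + 1" "C (j+1) (t + (j+1)) = C (j+1) t"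
      using Ct[of "j+1" j] Ct[of "j+1" "j+1"] that by auto
    then have "C j t - C (j+1) t = c" using c[rule_format, of t] c[rule_format, of "t+(j+1)"] by auto
    then show ?thesis using c[rule_format, of x] by auto
  qed
  have winE: "C n x - C 0 x - (C n t - C 0 t) \<in> {-1,0}" for x
  proof -
    obtain c where c: "\<forall>x. C n x - C 0 x \<in> {c, c+1}"
      using alt_window[OF edge, of n 0] D by (auto simp: cycle_edges_def)
    have "C n (t + 1) = C n t" "C 0 (t + 1) = C 0 t + 1"
      using Ct[of 1 n] Ct[of 1 0] assms(1) by auto
    then have "C n t - C 0 t = c + 1" using c[rule_format, of t] c[rule_format, of "t+1"] by auto
    then show ?thesis using c[rule_format, of x] by auto
  qed
  have key: "C 0 x - C 2 x - (C 0 t - C 2 t) \<in> {0,1}" for x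
  proof -
    define d where "d j = C j x - C (j+1) x - (C j t - C (j+1) t)" for j
    have dnn: "d j \<ge> 0" if "j < n" for j using win[OF that, of x] d_def by auto
    have "(\<Sum>j<n. d j) = (C 0 x - C 0 t) - (C n x - C n t)"
    proof -
      have "(\<Sum>j<n. d j) = - (\<Sum>j<n. (C (Suc j) x - C (Suc j) t) - (C j x - C j t))"
        by (simp add: d_def sum_negf[symmetric] algebra_simps)
      also have "\<dots> = (C 0 x - C 0 t) - (C n x - C n t)"
        by (subst sum_lessThan_telescope) simp
      finally show ?thesis .
    qed
    then have s: "(\<Sum>j<n. d j) \<in> {0,1}" using winE[of x] by auto
    have "(\<Sum>j\<in>{0,1}. d j) \<le> (\<Sum>j<n. d j)"
      by (rule sum_mono2) (use assms(1) dnn in auto)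
    moreover have "(\<Sum>j\<in>{0,1}. d j) \<ge> 0" using dnn assms(1) by simp
    moreover have "(\<Sum>j\<in>{0,1}. d j) = C 0 x - C 2 x - (C 0 t - C 2 t)"
      by (simp add: d_def numeral_2_eq_2)
    ultimately show ?thesis using s by auto
  qed
  define c where "c = C 0 t - C 2 t"
  have c01: "c \<in> {0, -1}" using key[of 0] by (auto simp: C_def c_def)
  define k where "k = (if c = 0 then 0 else 1::nat)"
  have "\<forall>x \<le> length u. dif 0 2 (take x u) \<in> {- int k, 1 - int k}"
  proof (intro allI impI)
    fix x
    have "C 0 x - C 2 x - c \<in> {0,1}" using key[of x] by (simp add: c_def)
    then show "dif 0 2 (take x u) \<in> {- int k, 1 - int k}"
      using c01 D[of 0 2 x] by (auto simp: k_def)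
  qed
  then have f: "filter (\<lambda>x. x=0 \<or> x=2) u = abab_factor 0 2 k (length (filter (\<lambda>x. x=0 \<or> x=(2::nat)) u))"
    using window_alt[of 0 2 k u] by (auto simp: k_def)
  have "(0::nat) \<in> set u" "(2::nat) \<in> set u" using assms(1,3)
    by (auto simp: alt_vertices_def cycle_vertices_def)
  then have "alternate u 0 2" using f by (auto simp: alternate_def)
  then have "(0,2) \<in> cycle_edges n" using assms(4) by (auto simp: alt_edges_def)
  then show False using assms(1) by (auto simp: cycle_edges_def)
qed

end
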